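(* Let $A,B,C$ be $N\times N$ real symmetric positive semidefinite matrices and $0\leq k\leq N$. Then \[ e_{k}(A)+e_{k}(B)+e_{k}(C)+e_{k}(A+B+C)\geq e_{k}(A+B)+e_{k}(B+C)+e_{k}(C+A), \] where $e_{k}(X)$ denotes the $k$-th elementary symmetric function of the eigenvalues of $X$. *)

theory Defs
  imports "Jordan_Normal_Form.Char_Poly"
begin

definition psd_mat :: "nat \<Rightarrow> real mat \<Rightarrow> bool" where
  "psd_mat N A \<longleftrightarrow> A \<in> carrier_mat N N \<and> transpose_mat A = A \<and>
     (\<forall>v \<in> carrier_vec N. v \<bullet> (A *\<^sub>v v) \<ge> 0)"

definition is_eigenvalue_list :: "real mat \<Rightarrow> real list \<Rightarrow> bool" where
  "is_eigenvalue_list A ls \<longleftrightarrow> length ls = dim_row A \<and>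
     char_poly A = (\<Prod>a\<leftarrow>ls. [:- a, 1:])"

definition eigenvalue_list :: "real mat \<Rightarrow> real list" where
  "eigenvalue_list A = (SOME ls. is_eigenvalue_list A ls)"

definition elem_sym :: "nat \<Rightarrow> real list \<Rightarrow> real" where
  "elem_sym k ls = (\<Sum>S \<in> {S. S \<subseteq> {..<length ls} \<and> card S = k}. \<Prod>i\<in>S. ls ! i)"

definition e_k :: "nat \<Rightarrow> real mat \<Rightarrow> real" where
  "e_k k X = elem_sym k (eigenvalue_list X)"

end

theory Submission
  imports Defs
begin


lemma real_ev:
  fixes A :: "real mat" and a :: complex
  assumes A: "A \<in> carrier_mat N N" and sym: "transpose_mat A = A"
    and ev: "eigenvalue (map_mat complex_of_real A) a"
  shows "Im a = 0"
proof -
  let ?C = "map_mat complex_of_real A"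
  obtain v where v: "v \<in> carrier_vec N" "v \<noteq> 0\<^sub>v N" "?C *\<^sub>v v = a \<cdot>\<^sub>v v"
    using ev A unfolding eigenvalue_def eigenvector_def by auto
  have symA: "\<And>i j. i < N \<Longrightarrow> j < N \<Longrightarrow> A $$ (i,j) = A $$ (j,i)"
    using sym A by (metis carrier_matD(1) carrier_matD(2) index_transpose_mat(1))
  have row: "\<And>i. i < N \<Longrightarrow> (\<Sum>j<N. of_real (A $$ (i,j)) * v $ j) = a * v $ i"
  proof -
    fix i assume i: "i < N"
    have "(?C *\<^sub>v v) $ i = a * v $ i" using v(3) v(1) i by simp
    moreover have "(?C *\<^sub>v v) $ i = (\<Sum>j<N. of_real (A $$ (i,j)) * v $ j)"
      using A v(1) i by (auto simp: scalar_prod_def lessThan_atLeast0 intro!: sum.cong)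
    ultimately show "(\<Sum>j<N. of_real (A $$ (i,j)) * v $ j) = a * v $ i" by simp
  qed
  define q where "q = (\<Sum>i<N. \<Sum>j<N. cnj (v $ i) * of_real (A $$ (i,j)) * v $ j)"
  define r where "r = (\<Sum>i<N. cnj (v $ i) * v $ i)"
  have q1: "q = a * r"
  proof -
    have "q = (\<Sum>i<N. cnj (v $ i) * (\<Sum>j<N. of_real (A $$ (i,j)) * v $ j))"
      unfolding q_def by (simp add: sum_distrib_left mult.assoc)
    also have "\<dots> = (\<Sum>i<N. cnj (v $ i) * (a * v $ i))" using row by simp
    finally show ?thesis unfolding r_def by (simp add: sum_distrib_left algebra_simps)
  qed
  have q2: "cnj q = q"
  proof -
    have "cnj q = (\<Sum>i<N. \<Sum>j<N. v $ i * of_real (A $$ (i,j)) * cnj (v $ j))"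
      unfolding q_def by (simp add: cnj_sum)
    also have "\<dots> = (\<Sum>j<N. \<Sum>i<N. v $ i * of_real (A $$ (i,j)) * cnj (v $ j))"
      by (rule sum.swap)
    also have "\<dots> = q" unfolding q_def
      by (intro sum.cong refl, simp add: symA mult.commute mult.left_commute)
    finally show ?thesis .
  qed
  have rr: "r = of_real (\<Sum>i<N. (cmod (v $ i))\<^sup>2)"
    unfolding r_def of_real_sum by (intro sum.cong refl) (metis complex_norm_square of_real_power mult.commute)
  have "\<exists>i<N. v $ i \<noteq> 0" using v by (metis carrier_vecD eq_vecI index_zero_vec(1) index_zero_vec(2))
  then obtain i where i: "i < N" "v $ i \<noteq> 0" by auto
  have pos: "(\<Sum>i<N. (cmod (v $ i))\<^sup>2) > 0"
    by (rule sum_pos2[of _ i], use i in auto)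
  have "Im q = 0" using q2 by (metis Im_complex_of_real Reals_cnj_iff complex_is_Real_iff)
  hence "Im a * (\<Sum>i<N. (cmod (v $ i))\<^sup>2) = 0" using q1 rr by simp
  thus ?thesis using pos by simp
qed

lemma map_poly_of_real_mult:
  "map_poly (of_real :: real \<Rightarrow> complex) (p * q) = map_poly of_real p * map_poly of_real q"
  by (rule poly_eqI) (simp add: coeff_mult coeff_map_poly)

lemma map_poly_of_real_inj:
  assumes h: "map_poly (of_real :: real \<Rightarrow> complex) p = map_poly of_real q" shows "p = q"
proof (rule poly_eqI)
  fix n
  have "coeff (map_poly (of_real :: real \<Rightarrow> complex) p) n = coeff (map_poly of_real q) n" using h by simp
  thus "coeff p n = coeff q n" by (simp add: coeff_map_poly)
qed

lemma eig_list_exists: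
  assumes "A \<in> carrier_mat N N" and "transpose_mat A = A"
  shows "is_eigenvalue_list A (eigenvalue_list A)"
proof -
  let ?C = "map_mat complex_of_real A"
  have C: "?C \<in> carrier_mat N N" using assms by simp
  obtain as where as: "char_poly ?C = (\<Prod>a\<leftarrow>as. [:- a, 1:])" "length as = N"
    using char_poly_factorized[OF C] by blast
  have real: "\<And>a. a \<in> set as \<Longrightarrow> Im a = 0"
  proof -
    fix a assume "a \<in> set as"
    hence "poly (char_poly ?C) a = 0" unfolding as(1)
      by (induct as) (auto)
    hence "eigenvalue ?C a" using eigenvalue_root_char_poly[OF C] by simp
    thus "Im a = 0" using real_ev assms by blast
  qed
  define ls where "ls = map Re as"
  have "map_poly complex_of_real (char_poly A) = char_poly ?C"
    by (rule sym, rule of_real_hom.char_poly_hom[OF assms(1)])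
  also have "\<dots> = map_poly complex_of_real (\<Prod>a\<leftarrow>ls. [:- a, 1:])"
    unfolding as(1) ls_def using real
  proof (induct as)
    case Nil thus ?case by simp
  next
    case (Cons b bs)
    have "b = complex_of_real (Re b)" using Cons(2) by (simp add: complex_eq_iff)
    hence "[:- b, 1:] = map_poly complex_of_real [:- Re b, 1:]" by simp
    moreover have "(\<Prod>a\<leftarrow>bs. [:- a, 1:]) = map_poly complex_of_real (\<Prod>a\<leftarrow>map Re bs. [:- a, 1:])"
      using Cons(1) Cons(2) by simp
    ultimately show ?case by (simp only: list.map prod_list.Cons map_poly_of_real_mult o_apply)
  qed
  finally have "char_poly A = (\<Prod>a\<leftarrow>ls. [:- a, 1:])"
    by (rule map_poly_of_real_inj)
  moreover have "length ls = dim_row A" using as(2) assms ls_def by simp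
  ultimately have "is_eigenvalue_list A ls" unfolding is_eigenvalue_list_def by simp
  thus ?thesis unfolding eigenvalue_list_def by (rule someI)
qed



definition dets :: "nat set \<Rightarrow> (nat \<Rightarrow> nat \<Rightarrow> real) \<Rightarrow> real" where
  "dets S M = (\<Sum>p\<in>{p. p permutes S}. of_int (sign p) * (\<Prod>i\<in>S. M i (p i)))"

lemma prod_neg: "finite A \<Longrightarrow> (\<Prod>i\<in>A. - (f i :: 'a :: comm_ring_1)) = (-1) ^ card A * prod f A"
  by (induct A rule: finite_induct) auto

lemma prod_monom1: "finite T \<Longrightarrow> (\<Prod>i\<in>T. monom (a i) 1) = monom (prod a T) (card T)"
  by (induct T rule: finite_induct) (auto simp: mult_monom)

lemma prod_monom0: "(\<Prod>i\<in>T. monom (a i) 0) = monom (prod a T) 0"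
  by (simp add: monom_0 prod_to_poly)

lemma coeff_prod_lin:
  fixes a b :: "nat \<Rightarrow> 'a :: comm_ring_1"
  assumes I: "finite I"
  shows "coeff (\<Prod>i\<in>I. monom (a i) 1 + monom (b i) 0) m =
     (\<Sum>T\<in>{T. T \<subseteq> I \<and> card T = m}. prod a T * prod b (I - T))"
proof -
  have "(\<Prod>i\<in>I. monom (a i) 1 + monom (b i) 0) =
      (\<Sum>T\<in>Pow I. monom (prod a T * prod b (I - T)) (card T))"
    unfolding prod_add[OF I]
  proof (intro sum.cong refl)
    fix T assume "T \<in> Pow I"
    hence "finite T" using I finite_subset by auto
    thus "(\<Prod>i\<in>T. monom (a i) 1) * (\<Prod>i\<in>I - T. monom (b i) 0) = monom (prod a T * prod b (I - T)) (card T)"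
      by (simp only: prod_monom1[OF \<open>finite T\<close>] prod_monom0 mult_monom) simp
  qed
  hence "coeff (\<Prod>i\<in>I. monom (a i) 1 + monom (b i) 0) m =
     (\<Sum>T\<in>Pow I. if card T = m then prod a T * prod b (I - T) else 0)"
    by (simp add: coeff_sum coeff_monom)
  also have "\<dots> = (\<Sum>T\<in>{T \<in> Pow I. card T = m}. prod a T * prod b (I - T))"
    by (rule sum.inter_filter[symmetric]) (use I in auto)
  also have "{T \<in> Pow I. card T = m} = {T. T \<subseteq> I \<and> card T = m}" by auto
  finally show ?thesis .
qed

lemma sum_compl_card:
  assumes "finite I" "k \<le> card I"
  shows "(\<Sum>T\<in>{T. T \<subseteq> I \<and> card T = card I - k}. g (I - T)) = (\<Sum>S\<in>{S. S \<subseteq> I \<and> card S = k}. g S)"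
proof (rule sum.reindex_bij_witness[of _ "\<lambda>S. I - S" "\<lambda>S. I - S"])
  fix S assume "S \<in> {S. S \<subseteq> I \<and> card S = k}"
  thus "I - (I - S) = S" "I - S \<in> {T. T \<subseteq> I \<and> card T = card I - k}"
    using assms by (auto simp: card_Diff_subset finite_subset)
next
  fix T assume T: "T \<in> {T. T \<subseteq> I \<and> card T = card I - k}"
  thus "I - (I - T) = T" by auto
  from T have "card (I - T) = k" using assms by (auto simp: card_Diff_subset finite_subset)
  thus "I - T \<in> {S. S \<subseteq> I \<and> card S = k}" by auto
qed auto

lemma coeff_list_prod:
  fixes ls :: "real list"
  shows "coeff (\<Prod>a\<leftarrow>ls. [:- a, 1:]) m =
    (\<Sum>T\<in>{T. T \<subseteq> {..<length ls} \<and> card T = m}. (-1) ^ (length ls - m) * (\<Prod>i\<in>{..<length ls} - T. ls ! i))"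
proof -
  have "(\<Prod>a\<leftarrow>ls. [:- a, 1:]) = (\<Prod>i\<in>{..<length ls}. monom 1 1 + monom (- ls ! i) 0)"
    unfolding prod.list_conv_set_nth
    by (auto simp: lessThan_atLeast0 monom_0 intro!: prod.cong) (simp add: monom_altdef)
  hence "coeff (\<Prod>a\<leftarrow>ls. [:- a, 1:]) m = (\<Sum>T\<in>{T. T \<subseteq> {..<length ls} \<and> card T = m}. prod (\<lambda>_. 1) T * (\<Prod>i\<in>{..<length ls} - T. - ls ! i))"
    using coeff_prod_lin[of "{..<length ls}" "\<lambda>_. 1::real" "\<lambda>i. - ls ! i" m] by simp
  also have "\<dots> = (\<Sum>T\<in>{T. T \<subseteq> {..<length ls} \<and> card T = m}. (-1) ^ (length ls - m) * (\<Prod>i\<in>{..<length ls} - T. ls ! i))"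
    by (intro sum.cong refl) (auto simp: prod_neg card_Diff_subset finite_subset)
  finally show ?thesis .
qed

lemma permutes_fix:
  assumes "T \<subseteq> I"
  shows "{p. p permutes I \<and> (\<forall>i\<in>T. p i = i)} = {p. p permutes (I - T)}"
proof safe
  fix p assume p: "p permutes I" "\<forall>i\<in>T. p i = i"
  show "p permutes (I - T)" using p unfolding permutes_def by blast
next
  fix p assume p: "p permutes (I - T)"
  show "p permutes I" by (rule permutes_subset[OF p]) auto
  fix i assume "i \<in> T" thus "p i = i" using p unfolding permutes_def by blast
qed

lemma coeff_of_int_mult: "coeff (of_int k * (p :: 'a :: comm_ring_1 poly)) m = of_int k * coeff p m"
  by (simp add: of_int_poly)

lemma prod_delta: "finite T \<Longrightarrow> (\<Prod>i\<in>T. if p i = i then 1 else (0::'a::comm_semiring_1)) = (if \<forall>i\<in>T. p i = i then 1 else 0)"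
  by (induct T rule: finite_induct) auto

lemma coeff_char_poly:
  fixes X :: "real mat"
  assumes X: "X \<in> carrier_mat N N"
  shows "coeff (char_poly X) m =
    (\<Sum>T\<in>{T. T \<subseteq> {..<N} \<and> card T = m}. (-1) ^ (N - m) * dets ({..<N} - T) (\<lambda>i j. X $$ (i,j)))"
proof -
  let ?I = "{..<N}"
  let ?M = "char_poly_matrix X"
  have M: "?M \<in> carrier_mat N N" using X by simp
  have ent: "\<And>p i. p permutes ?I \<Longrightarrow> i \<in> ?I \<Longrightarrow>
     ?M $$ (i, p i) = monom (if p i = i then 1 else 0) 1 + monom (- X $$ (i, p i)) 0"
  proof -
    fix p i assume p: "p permutes ?I" and i: "i \<in> ?I"
    hence pi: "p i < N" using permutes_in_image[OF p] by auto
    show "?M $$ (i, p i) = monom (if p i = i then 1 else 0) 1 + monom (- X $$ (i, p i)) 0"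
      using X i pi unfolding char_poly_matrix_def
      by (auto simp: monom_0 monom_altdef)
  qed
  have "char_poly X = (\<Sum>p\<in>{p. p permutes ?I}. of_int (sign p) *
        (\<Prod>i\<in>?I. monom (if p i = i then 1 else 0) 1 + monom (- X $$ (i, p i)) 0))"
    unfolding char_poly_def det_def using M ent
    by (auto simp: atLeast0LessThan intro!: sum.cong prod.cong)
  hence "coeff (char_poly X) m = (\<Sum>p\<in>{p. p permutes ?I}. of_int (sign p) *
      (\<Sum>T\<in>{T. T \<subseteq> ?I \<and> card T = m}. (\<Prod>i\<in>T. if p i = i then 1 else 0) * (\<Prod>i\<in>?I - T. - X $$ (i, p i))))"
    by (simp only: coeff_sum coeff_of_int_mult coeff_prod_lin[OF finite_lessThan])
  also have "\<dots> = (\<Sum>T\<in>{T. T \<subseteq> ?I \<and> card T = m}. \<Sum>p\<in>{p. p permutes ?I}. of_int (sign p) *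
      ((\<Prod>i\<in>T. if p i = i then 1 else 0) * (\<Prod>i\<in>?I - T. - X $$ (i, p i))))"
    by (simp add: sum_distrib_left) (rule sum.swap)
  also have "\<dots> = (\<Sum>T\<in>{T. T \<subseteq> {..<N} \<and> card T = m}. (-1) ^ (N - m) * dets ({..<N} - T) (\<lambda>i j. X $$ (i,j)))"
  proof (intro sum.cong refl)
    fix T assume T: "T \<in> {T. T \<subseteq> ?I \<and> card T = m}"
    hence fT: "finite T" and TI: "T \<subseteq> ?I" and cT: "card T = m" using finite_subset by auto
    have "(\<Sum>p\<in>{p. p permutes ?I}. of_int (sign p) *
      ((\<Prod>i\<in>T. if p i = i then 1 else 0) * (\<Prod>i\<in>?I - T. - X $$ (i, p i)))) =
      (\<Sum>p\<in>{p. p permutes ?I}. if (\<forall>i\<in>T. p i = i) then of_int (sign p) * (\<Prod>i\<in>?I - T. - X $$ (i, p i)) else 0)"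
      by (intro sum.cong refl) (simp add: prod_delta[OF fT])
    also have "\<dots> = (\<Sum>p\<in>{p. p permutes ?I \<and> (\<forall>i\<in>T. p i = i)}. of_int (sign p) * (\<Prod>i\<in>?I - T. - X $$ (i, p i)))"
      by (subst sum.inter_filter[symmetric]) (auto simp: finite_permutations intro!: sum.cong)
    also have "\<dots> = (\<Sum>p\<in>{p. p permutes (?I - T)}. of_int (sign p) * (\<Prod>i\<in>?I - T. - X $$ (i, p i)))"
      unfolding permutes_fix[OF TI] ..
    also have "\<dots> = (-1) ^ (N - m) * dets (?I - T) (\<lambda>i j. X $$ (i,j))"
      unfolding dets_def sum_distrib_left
      by (intro sum.cong refl) (simp add: prod_neg card_Diff_subset[OF fT TI] cT)
    finally show "(\<Sum>p\<in>{p. p permutes ?I}. of_int (sign p) *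
      ((\<Prod>i\<in>T. if p i = i then 1 else 0) * (\<Prod>i\<in>?I - T. - X $$ (i, p i)))) = (-1) ^ (N - m) * dets ({..<N} - T) (\<lambda>i j. X $$ (i,j))" .
  qed
  finally show ?thesis .
qed


definition Qf :: "nat \<Rightarrow> (nat \<Rightarrow> nat \<Rightarrow> real) \<Rightarrow> (nat \<Rightarrow> real) \<Rightarrow> real" where
  "Qf N M x = (\<Sum>i<N. \<Sum>j<N. x i * M i j * x j)"

definition psdf :: "nat \<Rightarrow> (nat \<Rightarrow> nat \<Rightarrow> real) \<Rightarrow> bool" where
  "psdf N M \<longleftrightarrow> (\<forall>i<N. \<forall>j<N. M i j = M j i) \<and> (\<forall>x. 0 \<le> Qf N M x)"

lemma quad_shift:
  assumes k: "k < N" and sym: "\<forall>i<N. \<forall>j<N. M i j = M j i"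
  shows "Qf N M (\<lambda>i. x i + (if i = k then t else 0)) =
     Qf N M x + 2 * t * (\<Sum>j<N. M k j * x j) + t\<^sup>2 * M k k"
proof -
  have A: "(\<Sum>i<N. \<Sum>j<N. x i * M i j * (if j = k then t else 0)) = t * (\<Sum>i<N. M k i * x i)"
    using k sym by (simp add: if_distrib sum_distrib_left cong: if_cong) (auto intro!: sum.cong simp: algebra_simps)
  have B: "(\<Sum>i<N. \<Sum>j<N. (if i = k then t else 0) * M i j * x j) = t * (\<Sum>j<N. M k j * x j)"
  proof -
    have "(\<Sum>i<N. \<Sum>j<N. (if i = k then t else 0) * M i j * x j) = (\<Sum>i<N. if i = k then t * (\<Sum>j<N. M k j * x j) else 0)"
      by (intro sum.cong refl) (auto simp: sum_distrib_left mult.assoc)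
    also have "\<dots> = t * (\<Sum>j<N. M k j * x j)" using k by simp
    finally show ?thesis .
  qed
  have C: "(\<Sum>i<N. \<Sum>j<N. (if i = k then t else 0) * M i j * (if j = k then t else 0)) = t\<^sup>2 * M k k"
  proof -
    have i: "\<And>i. (\<Sum>j<N. (if i = k then t else 0) * M i j * (if j = k then t else 0)) = (if i = k then t * M k k * t else 0)"
    proof -
      fix i
      have "(\<Sum>j<N. (if i = k then t else 0) * M i j * (if j = k then t else 0)) =
            (\<Sum>j<N. if j = k then (if i = k then t else 0) * M i j * t else 0)"
        by (intro sum.cong refl) auto
      also have "\<dots> = (if i = k then t * M k k * t else 0)" using k by simp
      finally show "(\<Sum>j<N. (if i = k then t else 0) * M i j * (if j = k then t else 0)) = (if i = k then t * M k k * t else 0)" .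
    qed
    show ?thesis unfolding i using k by (simp add: power2_eq_square)
  qed
  have "Qf N M (\<lambda>i. x i + (if i = k then t else 0)) =
     (\<Sum>i<N. \<Sum>j<N. x i * M i j * x j) + (\<Sum>i<N. \<Sum>j<N. x i * M i j * (if j = k then t else 0))
     + (\<Sum>i<N. \<Sum>j<N. (if i = k then t else 0) * M i j * x j)
     + (\<Sum>i<N. \<Sum>j<N. (if i = k then t else 0) * M i j * (if j = k then t else 0))"
    unfolding Qf_def by (simp add: sum.distrib[symmetric] algebra_simps)
  also have "\<dots> = Qf N M x + 2 * t * (\<Sum>j<N. M k j * x j) + t\<^sup>2 * M k k"
    unfolding A B C Qf_def by simp
  finally show ?thesis .
qed

lemma Qf_zero: "Qf N M (\<lambda>_. 0) = 0" unfolding Qf_def by simp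

lemma decomp_ind:
  "psdf N M \<Longrightarrow> (\<forall>i<N. \<forall>l<k. M i l = 0) \<Longrightarrow> N - k = d \<Longrightarrow>
   \<exists>w. \<forall>i<N. \<forall>j<N. M i j = (\<Sum>l\<in>{k..<N}. w l i * w l j)"
proof (induction d arbitrary: M k)
  case 0
  thus ?case by auto
next
  case (Suc d M k)
  have k: "k < N" and d: "N - Suc k = d" using Suc.prems by auto
  have sym: "\<forall>i<N. \<forall>j<N. M i j = M j i" and pos: "\<And>x. 0 \<le> Qf N M x"
    using Suc.prems(1) unfolding psdf_def by auto
  note qs = quad_shift[OF k sym]
  define c where "c = M k k"
  have "0 \<le> Qf N M (\<lambda>i. 0 + (if i = k then 1 else 0))" by (rule pos)
  hence c0: "c \<ge> 0" unfolding qs Qf_zero c_def by simp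
  have split: "\<And>w i j. (\<Sum>l\<in>{k..<N}. w l i * w l j) = w k i * w k j + (\<Sum>l\<in>{Suc k..<N}. w l i * w l j)"
    using k by (simp add: sum.atLeast_Suc_lessThan)
  show ?case
  proof (cases "c = 0")
    case True
    have Mk: "M i k = 0" if i: "i < N" for i
    proof (rule ccontr)
      assume ne: "M i k \<noteq> 0"
      define x where "x = (\<lambda>j. if j = i then 1 else (0::real))"
      have sx: "(\<Sum>j<N. M k j * x j) = M k i" unfolding x_def using i by (simp add: if_distrib cong: if_cong)
      have Mki: "M k i \<noteq> 0" using ne sym i k by metis
      define t where "t = - (Qf N M x + 1) / (2 * M k i)"
      have "0 \<le> Qf N M (\<lambda>j. x j + (if j = k then t else 0))" by (rule pos)
      also have "\<dots> = Qf N M x + 2 * t * M k i" unfolding qs sx using True c_def by simp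
      also have "\<dots> = -1" unfolding t_def using Mki by (simp add: field_simps)
      finally show False by simp
    qed
    have "\<forall>i<N. \<forall>l<Suc k. M i l = 0" using Suc.prems(2) Mk by (auto simp: less_Suc_eq)
    from Suc.IH[OF Suc.prems(1) this d] obtain w where
      w: "\<forall>i<N. \<forall>j<N. M i j = (\<Sum>l\<in>{Suc k..<N}. w l i * w l j)" by blast
    let ?w = "w(k := (\<lambda>_. 0))"
    have "\<forall>i<N. \<forall>j<N. M i j = (\<Sum>l\<in>{k..<N}. ?w l i * ?w l j)"
      unfolding split using w by (auto intro!: sum.cong)
    thus ?thesis by blast
  next
    case False
    hence cp: "c > 0" using c0 by simp
    define v where "v = (\<lambda>i. M i k / sqrt c)"
    define M' where "M' = (\<lambda>i j. M i j - v i * v j)"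
    have sym': "\<forall>i<N. \<forall>j<N. M' i j = M' j i" unfolding M'_def using sym by (auto simp: mult.commute)
    have pos': "0 \<le> Qf N M' x" for x
    proof -
      define s where "s = (\<Sum>j<N. M k j * x j)"
      have vs: "(\<Sum>i<N. v i * x i) = s / sqrt c" unfolding v_def s_def
        using sym k by (simp add: sum_divide_distrib)
      have "Qf N M' x = Qf N M x - (\<Sum>i<N. \<Sum>j<N. (v i * x i) * (v j * x j))"
        unfolding Qf_def M'_def by (simp add: sum_subtractf[symmetric] algebra_simps)
      also have "(\<Sum>i<N. \<Sum>j<N. (v i * x i) * (v j * x j)) = (\<Sum>i<N. v i * x i) * (\<Sum>j<N. v j * x j)"
        by (simp add: sum_product)
      also have "\<dots> = s^2 / c" unfolding vs using cp by (simp add: power2_eq_square)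
      finally have e1: "Qf N M' x = Qf N M x - s^2 / c" .
      have "0 \<le> Qf N M (\<lambda>i. x i + (if i = k then - s / c else 0))" by (rule pos)
      also have "\<dots> = Qf N M x - s^2 / c" unfolding qs s_def[symmetric] c_def[symmetric]
        using cp by (simp add: field_simps power2_eq_square)
      finally show ?thesis using e1 by simp
    qed
    have psd': "psdf N M'" unfolding psdf_def using sym' pos' by blast
    have zero': "\<forall>i<N. \<forall>l<Suc k. M' i l = 0"
    proof (intro allI impI)
      fix i l assume i: "i < N" and l: "l < Suc k"
      show "M' i l = 0"
      proof (cases "l = k")
        case True
        have "v k = c / sqrt c" unfolding v_def c_def ..
        hence "v i * v k = M i k" unfolding v_def using cp
          by (simp add: field_simps)
        thus ?thesis unfolding M'_def True by simp
      next
        case False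
        hence lk: "l < k" using l by simp
        have "M i l = 0" "M l k = 0" using Suc.prems(2) i lk k sym by (metis order.strict_trans)+
        thus ?thesis unfolding M'_def v_def by simp
      qed
    qed
    from Suc.IH[OF psd' zero' d] obtain w where
      w: "\<forall>i<N. \<forall>j<N. M' i j = (\<Sum>l\<in>{Suc k..<N}. w l i * w l j)" by blast
    let ?w = "w(k := v)"
    have "\<forall>i<N. \<forall>j<N. M i j = (\<Sum>l\<in>{k..<N}. ?w l i * ?w l j)"
      unfolding split using w unfolding M'_def by (auto intro!: sum.cong simp: algebra_simps)
    thus ?thesis by blast
  qed
qed

lemma psd_psdf:
  assumes "psd_mat N A" shows "psdf N (\<lambda>i j. A $$ (i,j))"
proof -
  have A: "A \<in> carrier_mat N N" and sym: "transpose_mat A = A"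
    and pos: "\<And>v. v \<in> carrier_vec N \<Longrightarrow> v \<bullet> (A *\<^sub>v v) \<ge> 0"
    using assms unfolding psd_mat_def by auto
  have s: "\<forall>i<N. \<forall>j<N. A $$ (i,j) = A $$ (j,i)"
    using sym A by (metis carrier_matD(1) carrier_matD(2) index_transpose_mat(1))
  have "Qf N (\<lambda>i j. A $$ (i,j)) x \<ge> 0" for x
  proof -
    have "vec N x \<bullet> (A *\<^sub>v vec N x) = Qf N (\<lambda>i j. A $$ (i,j)) x"
      using A unfolding Qf_def
      by (auto simp: scalar_prod_def lessThan_atLeast0 sum_distrib_left mult.assoc intro!: sum.cong)
    thus ?thesis using pos[of "vec N x"] by simp
  qed
  thus ?thesis unfolding psdf_def using s by blast
qed

lemma psd_decomp:
  assumes "psd_mat N A"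
  shows "\<exists>w. \<forall>i<N. \<forall>j<N. A $$ (i,j) = (\<Sum>l<N. w l i * w l j)"
  using decomp_ind[OF psd_psdf[OF assms], of 0 N] by (simp add: atLeast0LessThan)



definition Dd :: "nat set \<Rightarrow> (nat \<Rightarrow> nat \<Rightarrow> real) \<Rightarrow> (nat \<Rightarrow> nat) \<Rightarrow> real" where
  "Dd S W f = (\<Sum>p\<in>{p. p permutes S}. of_int (sign p) * (\<Prod>i\<in>S. W (f i) (p i)))"

definition trm :: "nat set \<Rightarrow> (nat \<Rightarrow> nat \<Rightarrow> real) \<Rightarrow> (nat \<Rightarrow> nat) \<Rightarrow> real" where
  "trm S W f = (\<Prod>i\<in>S. W (f i) i) * Dd S W f"

definition Gm :: "(nat \<Rightarrow> nat \<Rightarrow> real) \<Rightarrow> nat set \<Rightarrow> nat \<Rightarrow> nat \<Rightarrow> real" where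
  "Gm W J = (\<lambda>i l. \<Sum>j\<in>J. W j i * W j l)"

lemma CB:
  assumes S: "finite S" and J: "finite J"
  shows "dets S (Gm W J) = (\<Sum>f\<in>PiE S (\<lambda>_. J). trm S W f)"
proof -
  have "dets S (Gm W J) = (\<Sum>p\<in>{p. p permutes S}. of_int (sign p) *
          (\<Sum>f\<in>PiE S (\<lambda>_. J). \<Prod>i\<in>S. W (f i) i * W (f i) (p i)))"
    unfolding dets_def Gm_def by (simp add: prod_sum_PiE[OF S J])
  also have "\<dots> = (\<Sum>f\<in>PiE S (\<lambda>_. J). \<Sum>p\<in>{p. p permutes S}. of_int (sign p) *
          (\<Prod>i\<in>S. W (f i) i * W (f i) (p i)))"
    by (simp add: sum_distrib_left) (rule sum.swap)
  also have "\<dots> = (\<Sum>f\<in>PiE S (\<lambda>_. J). trm S W f)"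
    unfolding trm_def Dd_def
    by (intro sum.cong refl) (simp add: sum_distrib_left prod.distrib algebra_simps)
  finally show ?thesis .
qed

lemma Dd_noninj:
  assumes S: "finite S" and i: "a \<in> S" "b \<in> S" "a \<noteq> b" and f: "f a = f b"
  shows "Dd S W f = 0"
proof -
  let ?t = "Transposition.transpose a b"
  have t: "?t permutes S" using permutes_swap_id[OF i(1,2)] .
  have ft: "\<And>i. f (?t i) = f i" using f unfolding Transposition.transpose_def by auto
  have "Dd S W f = (\<Sum>p\<in>{p. p permutes S}. of_int (sign (p \<circ> ?t)) * (\<Prod>i\<in>S. W (f i) ((p \<circ> ?t) i)))"
    unfolding Dd_def by (rule sum_permutations_compose_right[OF t])
  also have "\<dots> = (\<Sum>p\<in>{p. p permutes S}. - (of_int (sign p) * (\<Prod>i\<in>S. W (f i) (p i))))"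
  proof (intro sum.cong refl)
    fix p assume "p \<in> {p. p permutes S}"
    hence p: "p permutes S" by simp
    have sg: "sign (p \<circ> ?t) = - sign p"
      using sign_compose[OF permutes_imp_permutation[OF S p] permutes_imp_permutation[OF S t]] i(3)
      by (simp add: sign_swap_id)
    have "(\<Prod>i\<in>S. W (f i) ((p \<circ> ?t) i)) = (\<Prod>i\<in>S. W (f (?t i)) (p (?t i)))"
      by (simp add: ft)
    also have "\<dots> = (\<Prod>i\<in>S. W (f i) (p i))"
      using prod.permute[OF t, of "\<lambda>i. W (f i) (p i)"] by (simp add: o_def)
    finally show "of_int (sign (p \<circ> ?t)) * (\<Prod>i\<in>S. W (f i) ((p \<circ> ?t) i)) = - (of_int (sign p) * (\<Prod>i\<in>S. W (f i) (p i)))"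
      by (simp add: sg)
  qed
  also have "\<dots> = - Dd S W f" unfolding Dd_def by (simp add: sum_negf)
  finally show ?thesis by simp
qed

lemma Dd_cong: assumes "(\<And>i. i \<in> S \<Longrightarrow> f i = g i)" shows "Dd S W f = Dd S W g"
proof -
  have "\<And>p. (\<Prod>i\<in>S. W (f i) (p i)) = (\<Prod>i\<in>S. W (g i) (p i))"
    by (rule prod.cong) (simp_all add: assms)
  thus ?thesis unfolding Dd_def by simp
qed

lemma trm_cong: assumes "(\<And>i. i \<in> S \<Longrightarrow> f i = g i)" shows "trm S W f = trm S W g"
proof -
  have "(\<Prod>i\<in>S. W (f i) i) = (\<Prod>i\<in>S. W (g i) i)"
    by (rule prod.cong) (simp_all add: assms)
  thus ?thesis unfolding trm_def using Dd_cong[of S f g W] assms by simp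
qed

lemma Dd_perm:
  assumes S: "finite S" and s: "s permutes S"
  shows "Dd S W (f \<circ> s) = of_int (sign s) * Dd S W f"
proof -
  have si: "inv_into UNIV s permutes S" using permutes_inv[OF s] .
  have "Dd S W (f \<circ> s) = (\<Sum>p\<in>{p. p permutes S}. of_int (sign p) * (\<Prod>i\<in>S. W (f i) (p (inv_into UNIV s i))))"
    unfolding Dd_def
  proof (intro sum.cong refl)
    fix p
    show "of_int (sign p) * (\<Prod>i\<in>S. W ((f \<circ> s) i) (p i)) = of_int (sign p) * (\<Prod>i\<in>S. W (f i) (p (inv_into UNIV s i)))"
      using prod.permutes_inv[OF s, of "\<lambda>a i. W (f a) (p i)"] by simp
  qed
  also have "\<dots> = (\<Sum>p\<in>{p. p permutes S}. of_int (sign (p \<circ> s)) * (\<Prod>i\<in>S. W (f i) ((p \<circ> s) (inv_into UNIV s i))))"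
    by (rule sum_permutations_compose_right[OF s])
  also have "\<dots> = (\<Sum>p\<in>{p. p permutes S}. of_int (sign s) * (of_int (sign p) * (\<Prod>i\<in>S. W (f i) (p i))))"
  proof (intro sum.cong refl)
    fix p assume "p \<in> {p. p permutes S}"
    hence p: "p permutes S" by simp
    have "sign (p \<circ> s) = sign p * sign s"
      using sign_compose[OF permutes_imp_permutation[OF S p] permutes_imp_permutation[OF S s]] .
    moreover have "\<And>i. (p \<circ> s) (inv_into UNIV s i) = p i" using permutes_inverses(1)[OF s] by simp
    ultimately show "of_int (sign (p \<circ> s)) * (\<Prod>i\<in>S. W (f i) ((p \<circ> s) (inv_into UNIV s i))) = of_int (sign s) * (of_int (sign p) * (\<Prod>i\<in>S. W (f i) (p i)))"
      by simp
  qed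
  also have "\<dots> = of_int (sign s) * Dd S W f" unfolding Dd_def by (simp add: sum_distrib_left)
  finally show ?thesis .
qed

lemma Dd_transp:
  assumes S: "finite S"
  shows "(\<Sum>s\<in>{s. s permutes S}. of_int (sign s) * (\<Prod>i\<in>S. W (h (s i)) i)) = Dd S W h"
proof -
  have "(\<Sum>s\<in>{s. s permutes S}. of_int (sign s) * (\<Prod>i\<in>S. W (h (s i)) i)) =
        (\<Sum>s\<in>{s. s permutes S}. of_int (sign s) * (\<Prod>i\<in>S. W (h i) (inv_into UNIV s i)))"
  proof (intro sum.cong refl)
    fix s assume "s \<in> {s. s permutes S}"
    hence s: "s permutes S" by simp
    show "of_int (sign s) * (\<Prod>i\<in>S. W (h (s i)) i) = of_int (sign s) * (\<Prod>i\<in>S. W (h i) (inv_into UNIV s i))"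
      using prod.permutes_inv[OF s, of "\<lambda>a i. W (h a) i"] by simp
  qed
  also have "\<dots> = (\<Sum>s\<in>{s. s permutes S}. of_int (sign (inv_into UNIV s)) * (\<Prod>i\<in>S. W (h i) (inv_into UNIV (inv_into UNIV s) i)))"
    by (rule sum_permutations_inverse)
  also have "\<dots> = Dd S W h" unfolding Dd_def
    by (intro sum.cong refl) (simp add: permutes_inv_inv sign_inverse permutes_imp_permutation[OF S])
  finally show ?thesis .
qed

lemma group_T:
  assumes S: "finite S" and J: "finite J" and TJ: "T \<subseteq> J"
  shows "(\<Sum>f\<in>{f \<in> PiE S (\<lambda>_. J). f ` S = T}. trm S W f) \<ge> 0"
proof (cases "card T = card S")
  case True
  have fT: "finite T" using TJ J finite_subset by auto
  obtain h where h: "bij_betw h S T" using finite_same_card_bij[OF S fT] True by metis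
  have injh: "inj_on h S" and hS: "h ` S = T" using h by (auto simp: bij_betw_def)
  let ?A = "{f \<in> PiE S (\<lambda>_. J). f ` S = T}"
  let ?P = "{s. s permutes S}"
  let ?i = "\<lambda>s. restrict (h \<circ> s) S"
  let ?j = "\<lambda>f x. if x \<in> S then inv_into S h (f x) else x"
  have ij: "?i (?j f) = f" if fA: "f \<in> ?A" for f
  proof
    have fP: "f \<in> PiE S (\<lambda>_. J)" and fS: "f ` S = T" using fA by auto
    fix x show "?i (?j f) x = f x"
    proof (cases "x \<in> S")
      case True
      hence "f x \<in> h ` S" using fS hS by auto
      thus ?thesis using True by (simp add: f_inv_into_f)
    next
      case False thus ?thesis using fP by (simp add: PiE_def extensional_def)
    qed
  qed
  have "(\<Sum>f\<in>?A. trm S W f) = (\<Sum>s\<in>?P. trm S W (?i s))"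
  proof (rule sum.reindex_bij_witness[of _ ?i ?j])
    fix s assume "s \<in> ?P"
    hence s: "s permutes S" by simp
    show "?j (?i s) = s"
    proof
      fix x show "?j (?i s) x = s x"
      proof (cases "x \<in> S")
        case True
        hence "s x \<in> S" using permutes_in_image[OF s] by simp
        thus ?thesis using True injh by simp
      next
        case False thus ?thesis using s by (simp add: permutes_not_in)
      qed
    qed
    have "(h \<circ> s) ` S = h ` (s ` S)" by auto
    hence "(h \<circ> s) ` S = T" using permutes_image[OF s] hS by simp
    moreover have "\<And>x. x \<in> S \<Longrightarrow> h (s x) \<in> J" using permutes_in_image[OF s] hS TJ by auto
    ultimately show "?i s \<in> ?A" by (auto simp: PiE_iff)
  next
    fix f assume "f \<in> ?A"
    hence fP: "f \<in> PiE S (\<lambda>_. J)" and fS: "f ` S = T" by auto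
    have injf: "inj_on f S" using True fS S by (simp add: eq_card_imp_inj_on)
    have bj: "bij_betw (?j f) S S"
    proof -
      have b1: "bij_betw f S T" using injf fS by (simp add: bij_betw_def)
      have b2: "bij_betw (inv_into S h) T S" using bij_betw_inv_into[OF h] .
      have "bij_betw (inv_into S h \<circ> f) S S" using bij_betw_trans[OF b1 b2] .
      thus ?thesis by (rule bij_betw_cong[THEN iffD1, rotated]) auto
    qed
    show "?j f \<in> ?P" using bij_imp_permutes[OF bj] by auto
    show "?i (?j f) = f" using ij[OF \<open>f \<in> ?A\<close>] .
  qed (simp add: ij)
  also have "\<dots> = (\<Sum>s\<in>?P. (\<Prod>i\<in>S. W (h (s i)) i) * (of_int (sign s) * Dd S W h))"
  proof (intro sum.cong refl)
    fix s assume "s \<in> ?P"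
    hence s: "s permutes S" by simp
    have "trm S W (?i s) = trm S W (h \<circ> s)" by (rule trm_cong) simp
    also have "\<dots> = (\<Prod>i\<in>S. W (h (s i)) i) * (of_int (sign s) * Dd S W h)"
      unfolding trm_def Dd_perm[OF S s] by simp
    finally show "trm S W (?i s) = (\<Prod>i\<in>S. W (h (s i)) i) * (of_int (sign s) * Dd S W h)" .
  qed
  also have "\<dots> = Dd S W h * (\<Sum>s\<in>?P. of_int (sign s) * (\<Prod>i\<in>S. W (h (s i)) i))"
    by (simp add: sum_distrib_left algebra_simps)
  also have "\<dots> = Dd S W h * Dd S W h" unfolding Dd_transp[OF S] ..
  finally show ?thesis by simp
next
  case False
  have "(\<Sum>f\<in>{f \<in> PiE S (\<lambda>_. J). f ` S = T}. trm S W f) = 0"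
  proof (rule sum.neutral, rule ballI)
    fix f assume "f \<in> {f \<in> PiE S (\<lambda>_. J). f ` S = T}"
    hence "card (f ` S) \<noteq> card S" using False by auto
    hence "\<not> inj_on f S" using card_image by blast
    then obtain a b where ab: "a \<in> S" "b \<in> S" "a \<noteq> b" "f a = f b" unfolding inj_on_def by blast
    show "trm S W f = 0" unfolding trm_def Dd_noninj[OF S ab] by simp
  qed
  thus ?thesis by simp
qed

lemma POS:
  assumes S: "finite S" and J: "finite J" and c: "\<And>X. X \<subseteq> J \<Longrightarrow> c X \<ge> 0"
  shows "(\<Sum>f\<in>PiE S (\<lambda>_. J). c (f ` S) * trm S W f) \<ge> 0"
proof -
  have fin: "finite (PiE S (\<lambda>_. J))" using S J by (simp add: finite_PiE)
  have sub: "(\<lambda>f. f ` S) ` PiE S (\<lambda>_. J) \<subseteq> Pow J" by (auto simp: PiE_iff)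
  have "(\<Sum>f\<in>PiE S (\<lambda>_. J). c (f ` S) * trm S W f) =
    (\<Sum>T\<in>Pow J. \<Sum>f\<in>{f \<in> PiE S (\<lambda>_. J). f ` S = T}. c (f ` S) * trm S W f)"
    by (rule sum.group[OF fin _ sub, symmetric]) (use J in simp)
  also have "\<dots> = (\<Sum>T\<in>Pow J. c T * (\<Sum>f\<in>{f \<in> PiE S (\<lambda>_. J). f ` S = T}. trm S W f))"
    by (intro sum.cong refl) (auto simp: sum_distrib_left)
  also have "\<dots> \<ge> 0"
    by (intro sum_nonneg mult_nonneg_nonneg c group_T[OF S J]) auto
  finally show ?thesis .
qed

lemma sum_sub_PiE:
  assumes "U \<subseteq> J" "finite S" "finite J"
  shows "(\<Sum>f\<in>PiE S (\<lambda>_. U). g f) = (\<Sum>f\<in>PiE S (\<lambda>_. J). of_bool (f ` S \<subseteq> U) * (g f :: real))"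
proof -
  have e: "PiE S (\<lambda>_. U) = {f \<in> PiE S (\<lambda>_. J). f ` S \<subseteq> U}" using assms(1) by (auto simp: PiE_iff extensional_def)
  show ?thesis unfolding e
    by (subst sum.inter_filter, simp add: finite_PiE assms(2,3), rule sum.cong[OF refl], simp)
qed

lemma IE:
  assumes S: "finite S" and fin: "finite A" "finite B" "finite C"
    and disj: "A \<inter> B = {}" "B \<inter> C = {}" "C \<inter> A = {}"
  shows "dets S (Gm W A) + dets S (Gm W B) + dets S (Gm W C) + dets S (Gm W (A \<union> B \<union> C))
     \<ge> dets S (Gm W (A \<union> B)) + dets S (Gm W (B \<union> C)) + dets S (Gm W (C \<union> A))"
proof -
  let ?J = "A \<union> B \<union> C"
  have J: "finite ?J" using fin by simp
  let ?s = "\<lambda>U. (\<Sum>f\<in>PiE S (\<lambda>_. ?J). of_bool (f ` S \<subseteq> U) * trm S W f)"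
  have e: "\<And>U. U \<subseteq> ?J \<Longrightarrow> dets S (Gm W U) = ?s U"
  proof -
    fix U assume U: "U \<subseteq> ?J"
    hence fU: "finite U" using J finite_subset by auto
    show "dets S (Gm W U) = ?s U" unfolding CB[OF S \<open>finite U\<close>] by (rule sum_sub_PiE[OF U S J])
  qed
  define c where "c = (\<lambda>X. of_bool (X \<subseteq> A) + of_bool (X \<subseteq> B) + of_bool (X \<subseteq> C) + of_bool (X \<subseteq> ?J)
     - of_bool (X \<subseteq> A \<union> B) - of_bool (X \<subseteq> B \<union> C) - of_bool (X \<subseteq> C \<union> A) :: real)"
  have c: "c X \<ge> 0" if X: "X \<subseteq> ?J" for X
    using X disj unfolding c_def by (auto simp: of_bool_def)
  have "dets S (Gm W A) + dets S (Gm W B) + dets S (Gm W C) + dets S (Gm W ?J)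
     - (dets S (Gm W (A \<union> B)) + dets S (Gm W (B \<union> C)) + dets S (Gm W (C \<union> A)))
     = (\<Sum>f\<in>PiE S (\<lambda>_. ?J). c (f ` S) * trm S W f)"
  proof -
    have "?s A + ?s B + ?s C + ?s ?J - (?s (A \<union> B) + ?s (B \<union> C) + ?s (C \<union> A))
       = (\<Sum>f\<in>PiE S (\<lambda>_. ?J). c (f ` S) * trm S W f)"
      by (simp only: sum.distrib[symmetric] sum_subtractf[symmetric]) (intro sum.cong refl, simp add: c_def algebra_simps)
    moreover have "A \<subseteq> ?J" "B \<subseteq> ?J" "C \<subseteq> ?J" "?J \<subseteq> ?J" "A \<union> B \<subseteq> ?J" "B \<union> C \<subseteq> ?J" "C \<union> A \<subseteq> ?J" by auto
    ultimately show ?thesis by (simp only: e)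
  qed
  also have "\<dots> \<ge> 0" by (rule POS[OF S J c])
  finally show ?thesis by simp
qed



lemma ek_dets:
  fixes X :: "real mat"
  assumes X: "X \<in> carrier_mat N N" and sym: "transpose_mat X = X" and k: "k \<le> N"
  shows "e_k k X = (\<Sum>S\<in>{S. S \<subseteq> {..<N} \<and> card S = k}. dets S (\<lambda>i j. X $$ (i,j)))"
proof -
  define ls where "ls = eigenvalue_list X"
  have ev: "is_eigenvalue_list X ls" unfolding ls_def by (rule eig_list_exists[OF X sym])
  hence len: "length ls = N" and cp: "char_poly X = (\<Prod>a\<leftarrow>ls. [:- a, 1:])"
    using X unfolding is_eigenvalue_list_def by auto
  let ?T = "{T. T \<subseteq> {..<N} \<and> card T = N - k}"
  have "coeff (char_poly X) (N - k) = coeff (\<Prod>a\<leftarrow>ls. [:- a, 1:]) (N - k)" using cp by simp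
  hence "(\<Sum>T\<in>?T. (-1) ^ (N - (N - k)) * dets ({..<N} - T) (\<lambda>i j. X $$ (i,j)))
       = (\<Sum>T\<in>?T. (-1) ^ (N - (N - k)) * (\<Prod>i\<in>{..<N} - T. ls ! i))"
    unfolding coeff_char_poly[OF X] coeff_list_prod len .
  hence "(-1) ^ (N - (N - k)) * (\<Sum>T\<in>?T. dets ({..<N} - T) (\<lambda>i j. X $$ (i,j)))
       = (-1) ^ (N - (N - k)) * (\<Sum>T\<in>?T. (\<Prod>i\<in>{..<N} - T. ls ! i))"
    by (simp add: sum_distrib_left)
  hence "(\<Sum>T\<in>?T. dets ({..<N} - T) (\<lambda>i j. X $$ (i,j))) = (\<Sum>T\<in>?T. (\<Prod>i\<in>{..<N} - T. ls ! i))"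
    by simp
  hence "(\<Sum>S\<in>{S. S \<subseteq> {..<N} \<and> card S = k}. dets S (\<lambda>i j. X $$ (i,j))) =
         (\<Sum>S\<in>{S. S \<subseteq> {..<N} \<and> card S = k}. (\<Prod>i\<in>S. ls ! i))"
    using sum_compl_card[of "{..<N}" k "\<lambda>S. dets S (\<lambda>i j. X $$ (i,j))"]
      sum_compl_card[of "{..<N}" k "\<lambda>S. (\<Prod>i\<in>S. ls ! i)"] k by simp
  thus ?thesis unfolding e_k_def elem_sym_def ls_def[symmetric] len by simp
qed

lemma dets_cong:
  assumes "\<And>i j. i \<in> S \<Longrightarrow> j \<in> S \<Longrightarrow> M i j = M' i j"
  shows "dets S M = dets S M'"
  unfolding dets_def
proof (intro sum.cong refl arg_cong2[where f = "(*)"] prod.cong)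
  fix p i assume "p \<in> {p. p permutes S}" "i \<in> S"
  thus "M i (p i) = M' i (p i)" using assms permutes_in_image by fastforce
qed

lemma Gm_union: "finite U \<Longrightarrow> finite V \<Longrightarrow> U \<inter> V = {} \<Longrightarrow> Gm W (U \<union> V) i l = Gm W U i l + Gm W V i l"
  unfolding Gm_def by (rule sum.union_disjoint)

theorem lemma5p4:
  fixes N k :: nat and A B C :: "real mat"
  assumes "psd_mat N A" and "psd_mat N B" and "psd_mat N C" and "k \<le> N"
  shows "e_k k A + e_k k B + e_k k C + e_k k (A + B + C)
         \<ge> e_k k (A + B) + e_k k (B + C) + e_k k (C + A)"
proof -
  have cA: "A \<in> carrier_mat N N" and sA: "transpose_mat A = A" using assms(1) unfolding psd_mat_def by auto
  have cB: "B \<in> carrier_mat N N" and sB: "transpose_mat B = B" using assms(2) unfolding psd_mat_def by auto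
  have cC: "C \<in> carrier_mat N N" and sC: "transpose_mat C = C" using assms(3) unfolding psd_mat_def by auto
  obtain wA where wA: "\<forall>i<N. \<forall>j<N. A $$ (i,j) = (\<Sum>l<N. wA l i * wA l j)" using psd_decomp[OF assms(1)] by blast
  obtain wB where wB: "\<forall>i<N. \<forall>j<N. B $$ (i,j) = (\<Sum>l<N. wB l i * wB l j)" using psd_decomp[OF assms(2)] by blast
  obtain wC where wC: "\<forall>i<N. \<forall>j<N. C $$ (i,j) = (\<Sum>l<N. wC l i * wC l j)" using psd_decomp[OF assms(3)] by blast
  define W where "W = (\<lambda>j. if j < N then wA j else if j < 2 * N then wB (j - N) else wC (j - 2 * N))"
  define JA where "JA = {0..<N}"
  define JB where "JB = {N..<2*N}"
  define JC where "JC = {2*N..<3*N}"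
  have fin: "finite JA" "finite JB" "finite JC" unfolding JA_def JB_def JC_def by auto
  have disj: "JA \<inter> JB = {}" "JB \<inter> JC = {}" "JC \<inter> JA = {}" unfolding JA_def JB_def JC_def by auto
  have GA: "A $$ (i,j) = Gm W JA i j" if "i < N" "j < N" for i j
    using wA that unfolding Gm_def JA_def W_def by (simp add: lessThan_atLeast0)
  have GB: "B $$ (i,j) = Gm W JB i j" if "i < N" "j < N" for i j
  proof -
    have "Gm W JB i j = (\<Sum>l\<in>{0 + N..<N + N}. W l i * W l j)" unfolding Gm_def JB_def by (simp add: mult_2)
    also have "\<dots> = (\<Sum>l\<in>{0..<N}. W (l + N) i * W (l + N) j)" by (rule sum.shift_bounds_nat_ivl)
    also have "\<dots> = (\<Sum>l<N. wB l i * wB l j)" unfolding W_def by (simp add: lessThan_atLeast0)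
    finally show ?thesis using wB that by simp
  qed
  have GC: "C $$ (i,j) = Gm W JC i j" if "i < N" "j < N" for i j
  proof -
    have "Gm W JC i j = (\<Sum>l\<in>{0 + 2 * N..<N + 2 * N}. W l i * W l j)" unfolding Gm_def JC_def by simp
    also have "\<dots> = (\<Sum>l\<in>{0..<N}. W (l + 2 * N) i * W (l + 2 * N) j)" by (rule sum.shift_bounds_nat_ivl)
    also have "\<dots> = (\<Sum>l<N. wC l i * wC l j)" unfolding W_def by (simp add: lessThan_atLeast0)
    finally show ?thesis using wC that by simp
  qed
  have sym2: "\<And>X Y. X \<in> carrier_mat N N \<Longrightarrow> Y \<in> carrier_mat N N \<Longrightarrow> transpose_mat X = X \<Longrightarrow> transpose_mat Y = Y \<Longrightarrow> transpose_mat (X + Y) = X + Y"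
    by (simp add: transpose_add)
  let ?I = "{S. S \<subseteq> {..<N} \<and> card S = k}"
  let ?d = "\<lambda>U S. dets S (Gm W U)"
  have key: "\<And>X U. X \<in> carrier_mat N N \<Longrightarrow> transpose_mat X = X \<Longrightarrow>
     (\<And>i j. i < N \<Longrightarrow> j < N \<Longrightarrow> X $$ (i,j) = Gm W U i j) \<Longrightarrow> e_k k X = (\<Sum>S\<in>?I. ?d U S)"
  proof -
    fix X U assume X: "X \<in> carrier_mat N N" "transpose_mat X = X"
      and h: "\<And>i j. i < N \<Longrightarrow> j < N \<Longrightarrow> X $$ (i,j) = Gm W U i j"
    show "e_k k X = (\<Sum>S\<in>?I. ?d U S)" unfolding ek_dets[OF X assms(4)]
      by (intro sum.cong refl dets_cong) (auto intro!: h)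
  qed
  have eA: "e_k k A = (\<Sum>S\<in>?I. ?d JA S)" by (rule key[OF cA sA GA])
  have eB: "e_k k B = (\<Sum>S\<in>?I. ?d JB S)" by (rule key[OF cB sB GB])
  have eC: "e_k k C = (\<Sum>S\<in>?I. ?d JC S)" by (rule key[OF cC sC GC])
  have eAB: "e_k k (A + B) = (\<Sum>S\<in>?I. ?d (JA \<union> JB) S)"
    by (rule key) (use cA cB sA sB sym2 GA GB Gm_union fin disj in auto)
  have eBC: "e_k k (B + C) = (\<Sum>S\<in>?I. ?d (JB \<union> JC) S)"
    by (rule key) (use cC cB sC sB sym2 GC GB Gm_union fin disj in auto)
  have eCA: "e_k k (C + A) = (\<Sum>S\<in>?I. ?d (JC \<union> JA) S)"
    by (rule key) (use cA cC sA sC sym2 GA GC Gm_union fin disj in auto)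
  have disj3: "(JA \<union> JB) \<inter> JC = {}" using disj by auto
  have eABC: "e_k k (A + B + C) = (\<Sum>S\<in>?I. ?d (JA \<union> JB \<union> JC) S)"
  proof (rule key)
    show "A + B + C \<in> carrier_mat N N" using cC by simp
    show "transpose_mat (A + B + C) = A + B + C"
      by (rule sym2[OF _ cC sym2[OF cA cB sA sB] sC]) (use cB in simp)
    fix i j assume ij: "i < N" "j < N"
    have "(A + B + C) $$ (i,j) = A $$ (i,j) + B $$ (i,j) + C $$ (i,j)" using ij cA cB cC by simp
    also have "\<dots> = Gm W (JA \<union> JB \<union> JC) i j"
      using GA[OF ij] GB[OF ij] GC[OF ij] Gm_union[of JA JB] Gm_union[of "JA \<union> JB" JC] fin disj disj3 by simp
    finally show "(A + B + C) $$ (i,j) = Gm W (JA \<union> JB \<union> JC) i j" .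
  qed
  have "(\<Sum>S\<in>?I. ?d (JA \<union> JB) S + ?d (JB \<union> JC) S + ?d (JC \<union> JA) S)
     \<le> (\<Sum>S\<in>?I. ?d JA S + ?d JB S + ?d JC S + ?d (JA \<union> JB \<union> JC) S)"
  proof (rule sum_mono)
    fix S assume "S \<in> ?I"
    hence "finite S" using finite_subset by auto
    thus "?d (JA \<union> JB) S + ?d (JB \<union> JC) S + ?d (JC \<union> JA) S
       \<le> ?d JA S + ?d JB S + ?d JC S + ?d (JA \<union> JB \<union> JC) S"
      using IE[OF _ fin disj] by blast
  qed
  thus ?thesis unfolding eA eB eC eAB eBC eCA eABC by (simp add: sum.distrib)
qed

end
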